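(* Let $P$ be a 6-stack whose rank $r(P)$ is a (positive) multiple of $3$. Then $P$ has a retract that is a 4-tower.
   Context: All posets are finite. For a poset $P$ and $p\in P$, the rank $r(p)$ of $p$ is the largest $m$ such that there is a chain $p_0<\dots<p_m=p$ in $P$. $P$ is ranked of rank $r(P)$ if every maximal chain has exactly $r(P)+1$ elements. For $0\le i\le j$, $P(i,j)=\{p\in P:i\le r(p)\le j\}$ (induced order). A subset $Q\subseteq P$ (induced order) is a retract of $P$ if there is an order-preserving $f:P\to Q$ with $f(q)=q$ for all $q\in Q$. The 6-crown $C_6$ is the poset on $\{x_0,x_1,x_2,y_0,y_1,y_2\}$ whose only strict comparabilities are $x_0<y_0>x_1<y_1>x_2<y_2>x_0$. A 6-stack is a ranked poset $P$ of rank $n\ge1$ such that $P(i,i+1)\cong C_6$ for each $0\le i<n$. The ordinal sum of posets $P_1,\dots,P_k$ ($k\ge1$) is their disjoint union ordered by the orders of the $P_i$ together with $p<q$ whenever $p\in P_i,q\in P_j,i<j$. A 4-tower is an ordinal sum of one or more two-element antichains. *)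

theory Defs
  imports Main
begin

definition finite_poset :: "'a set \<Rightarrow> ('a \<Rightarrow> 'a \<Rightarrow> bool) \<Rightarrow> bool" where
  "finite_poset P le \<longleftrightarrow> finite P
     \<and> (\<forall>x\<in>P. le x x)
     \<and> (\<forall>x\<in>P. \<forall>y\<in>P. le x y \<and> le y x \<longrightarrow> x = y)
     \<and> (\<forall>x\<in>P. \<forall>y\<in>P. \<forall>z\<in>P. le x y \<and> le y z \<longrightarrow> le x z)"

definition strict :: "('a \<Rightarrow> 'a \<Rightarrow> bool) \<Rightarrow> 'a \<Rightarrow> 'a \<Rightarrow> bool" where
  "strict le x y \<longleftrightarrow> le x y \<and> x \<noteq> y"

definition elem_rank :: "'a set \<Rightarrow> ('a \<Rightarrow> 'a \<Rightarrow> bool) \<Rightarrow> 'a \<Rightarrow> nat" where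
  "elem_rank P le p = Max {length xs - 1 | xs. xs \<noteq> [] \<and> set xs \<subseteq> P
      \<and> sorted_wrt (strict le) xs \<and> last xs = p}"

definition is_chain :: "'a set \<Rightarrow> ('a \<Rightarrow> 'a \<Rightarrow> bool) \<Rightarrow> 'a set \<Rightarrow> bool" where
  "is_chain P le C \<longleftrightarrow> C \<subseteq> P \<and> (\<forall>x\<in>C. \<forall>y\<in>C. le x y \<or> le y x)"

definition maximal_chain :: "'a set \<Rightarrow> ('a \<Rightarrow> 'a \<Rightarrow> bool) \<Rightarrow> 'a set \<Rightarrow> bool" where
  "maximal_chain P le C \<longleftrightarrow> is_chain P le C \<and> (\<forall>D. is_chain P le D \<and> C \<subseteq> D \<longrightarrow> D = C)"

definition ranked_of_rank :: "'a set \<Rightarrow> ('a \<Rightarrow> 'a \<Rightarrow> bool) \<Rightarrow> nat \<Rightarrow> bool" where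
  "ranked_of_rank P le n \<longleftrightarrow> (\<forall>C. maximal_chain P le C \<longrightarrow> card C = n + 1)"

text \<open>P(i,j), with the induced order (restriction of le).\<close>
definition rank_slice :: "'a set \<Rightarrow> ('a \<Rightarrow> 'a \<Rightarrow> bool) \<Rightarrow> nat \<Rightarrow> nat \<Rightarrow> 'a set" where
  "rank_slice P le i j = {p \<in> P. i \<le> elem_rank P le p \<and> elem_rank P le p \<le> j}"

definition order_isomorphic ::
  "'a set \<Rightarrow> ('a \<Rightarrow> 'a \<Rightarrow> bool) \<Rightarrow> 'b set \<Rightarrow> ('b \<Rightarrow> 'b \<Rightarrow> bool) \<Rightarrow> bool" where
  "order_isomorphic P le Q le' \<longleftrightarrow>
     (\<exists>f. bij_betw f P Q \<and> (\<forall>x\<in>P. \<forall>y\<in>P. le x y \<longleftrightarrow> le' (f x) (f y)))"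

text \<open>The 6-crown: x_0,x_1,x_2 encoded as 0,1,2 and y_0,y_1,y_2 as 3,4,5;
  strict comparabilities x0<y0>x1<y1>x2<y2>x0.\<close>
definition crown6 :: "nat set" where
  "crown6 = {0,1,2,3,4,5}"

definition crown6_le :: "nat \<Rightarrow> nat \<Rightarrow> bool" where
  "crown6_le a b \<longleftrightarrow> a = b \<or> (a, b) \<in> {(0,3), (1,3), (1,4), (2,4), (2,5), (0,5)}"

definition six_stack :: "'a set \<Rightarrow> ('a \<Rightarrow> 'a \<Rightarrow> bool) \<Rightarrow> nat \<Rightarrow> bool" where
  "six_stack P le n \<longleftrightarrow> finite_poset P le \<and> n \<ge> 1 \<and> ranked_of_rank P le n
     \<and> (\<forall>i<n. order_isomorphic (rank_slice P le i (i+1)) le crown6 crown6_le)"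

definition is_retract :: "'a set \<Rightarrow> ('a \<Rightarrow> 'a \<Rightarrow> bool) \<Rightarrow> 'a set \<Rightarrow> bool" where
  "is_retract P le Q \<longleftrightarrow> Q \<subseteq> P \<and> (\<exists>f. f ` P \<subseteq> Q
     \<and> (\<forall>x\<in>P. \<forall>y\<in>P. le x y \<longrightarrow> le (f x) (f y)) \<and> (\<forall>q\<in>Q. f q = q))"

text \<open>Ordinal sum of k two-element antichains, modelled on pairs (i,b), i<k, b<2:
  (i,b) \<le> (j,c) iff equal or i<j.\<close>
definition tower4 :: "nat \<Rightarrow> (nat \<times> nat) set" where
  "tower4 k = {0..<k} \<times> {0,1}"

definition tower4_le :: "nat \<times> nat \<Rightarrow> nat \<times> nat \<Rightarrow> bool" where
  "tower4_le a b \<longleftrightarrow> a = b \<or> fst a < fst b"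

definition is_four_tower :: "'a set \<Rightarrow> ('a \<Rightarrow> 'a \<Rightarrow> bool) \<Rightarrow> bool" where
  "is_four_tower Q le \<longleftrightarrow> (\<exists>k\<ge>1. order_isomorphic Q le (tower4 k) tower4_le)"

end

theory Submission
  imports Defs
begin


definition mle :: "nat \<times> nat \<Rightarrow> nat \<times> nat \<Rightarrow> bool" where
  "mle x y \<longleftrightarrow> x = y \<or> (fst y = Suc (fst x) \<and> snd x \<noteq> snd y) \<or> fst x + 2 \<le> fst y"

definition gM :: "nat \<times> nat \<Rightarrow> nat \<times> nat" where
  "gM x = (let i = fst x; a = snd x in
     if i mod 3 = 0 then (if a = 2 then (i,0) else (i,a))
     else if i mod 3 = 1 then (if a=0 then (i+1,2) else if a=1 then (i-1,0) else (i,2))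
     else (if a=0 then (i-1,2) else if a=1 then (i+1,0) else (i,2)))"

lemma gM_fst: "fst x \<le> fst (gM x) + 1 \<and> fst (gM x) \<le> fst x + 1"
  unfolding gM_def Let_def by auto

lemma gM_mono:
  assumes "snd x < 3" "snd y < 3" "mle x y"
  shows "mle (gM x) (gM y)"
proof -
  obtain i a j b where xy: "x = (i,a)" "y = (j,b)" by fastforce
  have a: "a = 0 \<or> a = 1 \<or> a = 2" and b: "b = 0 \<or> b = 1 \<or> b = 2" using assms xy by auto
  have s: "i mod 3 = 0 \<or> i mod 3 = 1 \<or> i mod 3 = 2" by presburger
  have "j = i \<or> j = Suc i \<or> j = Suc (Suc i) \<or> j = Suc (Suc (Suc i)) \<or> i + 4 \<le> j"
    using assms(3) unfolding xy mle_def by auto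
  then show ?thesis
  proof (elim disjE)
    assume "i + 4 \<le> j"
    then show ?thesis using gM_fst[of x] gM_fst[of y] unfolding mle_def xy by auto
  qed (use assms(3) a b s in \<open>auto simp: xy mle_def gM_def Let_def mod_Suc\<close>)
qed



definition M :: "nat \<Rightarrow> (nat \<times> nat) set" where "M n = {x. fst x \<le> n \<and> snd x < 3}"
definition QC :: "nat \<Rightarrow> (nat \<times> nat) set" where
  "QC n = {x. fst x \<le> n \<and> (fst x mod 3 = 0 \<and> snd x < 2 \<or> fst x mod 3 \<noteq> 0 \<and> snd x = 2)}"
definition T :: "nat \<times> nat \<Rightarrow> nat \<times> nat" where
  "T x = (if fst x mod 3 = 0 then (2*(fst x div 3), snd x) else (2*(fst x div 3)+1, fst x mod 3 - 1))"






lemma nat3': obtains t s where "(i::nat) = 3*t+s" "s < 3"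
  by (metis div_mult_mod_eq mod_less_divisor zero_less_numeral mult.commute)

lemma m3: "(3*t) mod 3 = (0::nat)" "(3*t+1) mod 3 = (1::nat)" "(3*t+2) mod 3 = (2::nat)" "(3*t+3) mod 3 = (0::nat)"
  by (simp_all add: mod_Suc)

lemma gM_in: assumes "3 dvd n" "x \<in> M n" shows "gM x \<in> QC n"
proof -
  obtain i a where xi: "x = (i,a)" by fastforce
  obtain t s where ts: "i = 3*t+s" "s<3" using nat3' by blast
  obtain m where m: "n = 3*m" using assms(1) unfolding dvd_def by blast
  have s: "s = 0 \<or> s = 1 \<or> s = 2" using ts by auto
  have a: "a = 0 \<or> a = 1 \<or> a = 2" using assms xi unfolding M_def by auto
  have le: "3*t+s \<le> 3*m" using assms xi ts unfolding M_def m by auto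
  show ?thesis using s
  proof (elim disjE)
    assume s0: "s = 0"
    have g: "gM x = (if a = 2 then (3*t,0) else (3*t,a))" unfolding xi ts s0 gM_def Let_def using m3 by simp
    show ?thesis using a le m3 unfolding g s0 m QC_def by auto
  next
    assume s1: "s = 1" then have tm: "t < m" using le by auto
    have g: "gM x = (if a=0 then (3*t+2,2) else if a=1 then (3*t,0) else (3*t+1,2))"
      unfolding xi ts s1 gM_def Let_def using m3 by simp
    show ?thesis using a tm m3 unfolding g m QC_def by auto
  next
    assume s1: "s = 2" then have tm: "t < m" using le by auto
    have g: "gM x = (if a=0 then (3*t+1,2) else if a=1 then (3*t+3,0) else (3*t+2,2))"
      unfolding xi ts s1 gM_def Let_def using m3 by simp
    show ?thesis using a tm m3 unfolding g m QC_def by auto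
  qed
qed

lemma QC_M: "QC n \<subseteq> M n" unfolding QC_def M_def by auto

lemma gM_QC: "x \<in> QC n \<Longrightarrow> gM x = x"
  unfolding QC_def gM_def Let_def by (cases x) auto

lemma nat3: obtains t s where "(i::nat) = 3*t+s" "s < 3"
  by (metis div_mult_mod_eq mod_less_divisor zero_less_numeral mult.commute)

lemma decomp3: assumes "s < 3" shows "(3*t+s) mod 3 = (s::nat)" "(3*t+s) div 3 = t"
  using assms by auto

lemma T_ord: assumes "x \<in> QC n" "y \<in> QC n" shows "mle x y \<longleftrightarrow> tower4_le (T x) (T y)"
proof -
  obtain i a j b where xy: "x = (i,a)" "y = (j,b)" by fastforce
  obtain t s where ts: "i = 3*t+s" "s<3" using nat3 by blast
  obtain t' s' where ts': "j = 3*t'+s'" "s'<3" using nat3 by blast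
  have Tx: "T x = (if s = 0 then (2*t, a) else (2*t+1, s-1))"
    using decomp3[OF ts(2)] by (simp add: T_def xy ts(1))
  have Ty: "T y = (if s' = 0 then (2*t', b) else (2*t'+1, s'-1))"
    using decomp3[OF ts'(2)] by (simp add: T_def xy ts'(1))
  have qx: "(s=0 \<and> a<2) \<or> (s\<noteq>0 \<and> a=2)" using assms(1) decomp3[OF ts(2)] unfolding xy ts(1) QC_def by auto
  have qy: "(s'=0 \<and> b<2) \<or> (s'\<noteq>0 \<and> b=2)" using assms(2) decomp3[OF ts'(2)] unfolding xy ts'(1) QC_def by auto
  have s: "s = 0 \<or> s = 1 \<or> s = 2" and s': "s' = 0 \<or> s' = 1 \<or> s' = 2" using ts ts' by auto
  have e: "mle x y \<longleftrightarrow> ((3*t+s, a) = (3*t'+s', b) \<or> (3*t'+s' = Suc (3*t+s) \<and> a \<noteq> b) \<or> 3*t+s+2 \<le> 3*t'+s')"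
    unfolding mle_def xy ts(1) ts'(1) by simp
  show ?thesis unfolding e tower4_le_def Tx Ty using qx qy s s'
    by (elim disjE; simp; presburger)
qed

lemma T_bij: assumes "3 dvd n" shows "bij_betw T (QC n) (tower4 (2*(n div 3)+1))"
proof -
  have inj: "inj_on T (QC n)"
  proof
    fix x y assume "x \<in> QC n" "y \<in> QC n" "T x = T y"
    then have "mle x y" "mle y x" using T_ord[of x n y] T_ord[of y n x] unfolding tower4_le_def by auto
    then show "x = y" unfolding mle_def by auto
  qed
  have sub: "T ` QC n \<subseteq> tower4 (2*(n div 3)+1)"
  proof
    fix z assume "z \<in> T ` QC n"
    then obtain x where x: "x \<in> QC n" "z = T x" by blast
    obtain i a where xi: "x = (i,a)" by fastforce
    obtain t s where ts: "i = 3*t+s" "s<3" using nat3 by blast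
    have s: "s = 0 \<or> s = 1 \<or> s = 2" using ts by auto
    have dm: "(3*t+s) div 3 = t" "(3*t+s) mod 3 = s" using ts by auto
    obtain m where m: "n = 3*m" using assms(1) unfolding dvd_def by blast
    have Tx: "T x = (if s = 0 then (2*t, a) else (2*t+1, s-1))" using dm by (simp add: T_def xi ts(1))
    have q: "3*t+s \<le> 3*m" "s = 0 \<Longrightarrow> a < 2" using x(1) dm unfolding xi ts(1) m QC_def by auto
    have "s \<noteq> 0 \<Longrightarrow> t < m" using q by auto
    then show "z \<in> tower4 (2*(n div 3)+1)" using q s unfolding x(2) Tx tower4_def m by auto
  qed
  have sup: "tower4 (2*(n div 3)+1) \<subseteq> T ` QC n"
  proof
    fix z assume z: "z \<in> tower4 (2*(n div 3)+1)"
    obtain k c where zk: "z = (k,c)" by fastforce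
    obtain m where m: "n = 3*m" using assms(1) unfolding dvd_def by blast
    have c: "c = 0 \<or> c = 1" and k: "k \<le> 2*m" using z unfolding zk tower4_def m by auto
    show "z \<in> T ` QC n"
    proof (cases "even k")
      case True
      then obtain t where t: "k = 2*t" by blast
      have "(3*t, c) \<in> QC n" "T (3*t, c) = z" using c k unfolding t zk m QC_def T_def by auto
      then show ?thesis by blast
    next
      case False
      then obtain t where t: "k = 2*t+1" using oddE by blast
      have "(3*t+1+c, 2) \<in> QC n" "T (3*t+1+c, 2) = z" using c k unfolding t zk m QC_def T_def
        by (auto simp: mod_Suc)
      then show ?thesis by blast
    qed
  qed
  show ?thesis using inj sub sup unfolding bij_betw_def by blast
qed



lemma sw_distinct: "sorted_wrt (strict le) xs \<Longrightarrow> distinct xs"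
  by (induction xs) (auto simp: strict_def)

lemma sw_last: "sorted_wrt R xs \<Longrightarrow> xs \<noteq> [] \<Longrightarrow> a \<in> set xs \<Longrightarrow> a = last xs \<or> R a (last xs)"
  by (induction xs) auto

lemma sw_cmp: "sorted_wrt R xs \<Longrightarrow> a \<in> set xs \<Longrightarrow> b \<in> set xs \<Longrightarrow> a = b \<or> R a b \<or> R b a"
  by (induction xs) auto

locale stk =
  fixes P :: "'a set" and le :: "'a \<Rightarrow> 'a \<Rightarrow> bool" and n :: nat
  assumes ss: "six_stack P le n"
begin

lemma fp: "finite_poset P le" using ss unfolding six_stack_def by blast
lemma finP: "finite P" using fp unfolding finite_poset_def by blast
lemma refl: "x \<in> P \<Longrightarrow> le x x" using fp unfolding finite_poset_def by blast
lemma antis: "x \<in> P \<Longrightarrow> y \<in> P \<Longrightarrow> le x y \<Longrightarrow> le y x \<Longrightarrow> x = y"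
  using fp unfolding finite_poset_def by blast
lemma trans: "x \<in> P \<Longrightarrow> y \<in> P \<Longrightarrow> z \<in> P \<Longrightarrow> le x y \<Longrightarrow> le y z \<Longrightarrow> le x z"
  using fp unfolding finite_poset_def by blast
lemma n1: "n \<ge> 1" using ss unfolding six_stack_def by blast
lemma ranked: "ranked_of_rank P le n" using ss unfolding six_stack_def by blast

abbreviation r where "r \<equiv> elem_rank P le"

definition CH where "CH p = {length xs - 1 | xs. xs \<noteq> [] \<and> set xs \<subseteq> P
      \<and> sorted_wrt (strict le) xs \<and> last xs = p}"

lemma r_def': "r p = Max (CH p)" unfolding elem_rank_def CH_def by simp

lemma CH_fin: "finite (CH p)"
proof -
  have "CH p \<subseteq> {0..card P}"
  proof
    fix k assume "k \<in> CH p"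
    then obtain xs where xs: "k = length xs - 1" "set xs \<subseteq> P" "sorted_wrt (strict le) xs"
      unfolding CH_def by blast
    have "length xs = card (set xs)" using sw_distinct[OF xs(3)] by (simp add: distinct_card)
    also have "\<dots> \<le> card P" using xs(2) finP by (simp add: card_mono)
    finally show "k \<in> {0..card P}" using xs(1) by auto
  qed
  then show ?thesis using finite_subset by blast
qed

lemma CH_ne: assumes "p \<in> P" shows "CH p \<noteq> {}"
proof -
  have "length [p] - 1 \<in> CH p" using assms unfolding CH_def by fastforce
  then show ?thesis by blast
qed

lemma rank_ex: assumes "p \<in> P"
  shows "\<exists>xs. xs \<noteq> [] \<and> set xs \<subseteq> P \<and> sorted_wrt (strict le) xs \<and> last xs = p \<and> length xs = r p + 1"
proof -
  have "r p \<in> CH p" unfolding r_def' using CH_fin CH_ne[OF assms] by (rule Max_in)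
  then show ?thesis unfolding CH_def by force
qed

lemma rank_ge: "xs \<noteq> [] \<Longrightarrow> set xs \<subseteq> P \<Longrightarrow> sorted_wrt (strict le) xs \<Longrightarrow> last xs = p \<Longrightarrow> length xs - 1 \<le> r p"
  unfolding r_def' by (rule Max_ge[OF CH_fin]) (auto simp: CH_def)

lemma rank_less: assumes "x \<in> P" "y \<in> P" "le x y" "x \<noteq> y" shows "r x < r y"
proof -
  obtain xs where xs: "xs \<noteq> []" "set xs \<subseteq> P" "sorted_wrt (strict le) xs" "last xs = x" "length xs = r x + 1"
    using rank_ex[OF assms(1)] by blast
  have "\<forall>a\<in>set xs. strict le a y"
  proof
    fix a assume a: "a \<in> set xs"
    then have ax: "a = x \<or> strict le a x" using sw_last[OF xs(3) xs(1) a] xs(4) by auto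
    have aP: "a \<in> P" using a xs(2) by auto
    have "le a y" using ax trans[OF aP assms(1) assms(2) _ assms(3)] assms(3) unfolding strict_def by auto
    moreover have "a \<noteq> y" using ax antis[OF assms(1) assms(2) assms(3)] assms(4) unfolding strict_def by auto
    ultimately show "strict le a y" unfolding strict_def by auto
  qed
  then have "sorted_wrt (strict le) (xs @ [y])" using xs(3) by (simp add: sorted_wrt_append)
  then have "length (xs @ [y]) - 1 \<le> r y" using xs assms(2) by (intro rank_ge) auto
  then show ?thesis using xs(5) by simp
qed

lemma rank_pred: assumes "p \<in> P" "r p \<ge> 1"
  shows "\<exists>z\<in>P. le z p \<and> z \<noteq> p \<and> r z + 1 = r p"
proof -
  obtain xs where xs: "xs \<noteq> []" "set xs \<subseteq> P" "sorted_wrt (strict le) xs" "last xs = p" "length xs = r p + 1"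
    using rank_ex[OF assms(1)] by blast
  define ys where "ys = butlast xs"
  have xsys: "xs = ys @ [p]" using xs(1,4) unfolding ys_def by (metis append_butlast_last_id)
  have ysne: "ys \<noteq> []" using xs(5) assms(2) xsys by auto
  define z where "z = last ys"
  have zin: "z \<in> set ys" using ysne unfolding z_def by simp
  have sys: "sorted_wrt (strict le) ys" and zp: "strict le z p"
    using xs(3) zin unfolding xsys by (auto simp: sorted_wrt_append)
  have zP: "z \<in> P" using zin xs(2) xsys by auto
  have "length ys - 1 \<le> r z" using ysne xs(2) sys unfolding xsys z_def by (intro rank_ge) auto
  moreover have "r z < r p" using rank_less[OF zP assms(1)] zp unfolding strict_def by auto
  ultimately have "r z + 1 = r p" using xs(5) xsys by auto
  then show ?thesis using zP zp unfolding strict_def by blast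
qed

lemma chain_ext: "is_chain P le C \<Longrightarrow> \<exists>D. maximal_chain P le D \<and> C \<subseteq> D"
proof (induction "card P - card C" arbitrary: C rule: less_induct)
  case less
  show ?case
  proof (cases "maximal_chain P le C")
    case True then show ?thesis by blast
  next
    case False
    then obtain D where D: "is_chain P le D" "C \<subseteq> D" "D \<noteq> C" using less.prems unfolding maximal_chain_def by blast
    have "D \<subseteq> P" using D(1) unfolding is_chain_def by auto
    then have fD: "finite D" using finP finite_subset by blast
    have "card C < card D" using D(2,3) fD by (simp add: psubset_card_mono)
    moreover have "card D \<le> card P" using \<open>D \<subseteq> P\<close> finP by (simp add: card_mono)
    ultimately have "card P - card D < card P - card C" by arith
    then obtain E where "maximal_chain P le E" "D \<subseteq> E" using less.hyps[of D] D(1) by blast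
    then show ?thesis using D(2) by blast
  qed
qed

lemma rank_le_n: assumes "p \<in> P" shows "r p \<le> n"
proof -
  obtain xs where xs: "xs \<noteq> []" "set xs \<subseteq> P" "sorted_wrt (strict le) xs" "last xs = p" "length xs = r p + 1"
    using rank_ex[OF assms(1)] by blast
  have "is_chain P le (set xs)" unfolding is_chain_def
    using xs(2) sw_cmp[OF xs(3)] refl unfolding strict_def by blast
  then obtain D where D: "maximal_chain P le D" "set xs \<subseteq> D" using chain_ext by blast
  have "card D = n + 1" using ranked D(1) unfolding ranked_of_rank_def by auto
  have "D \<subseteq> P" using D(1) unfolding maximal_chain_def is_chain_def by auto
  then have "finite D" using finP finite_subset by blast
  then have "card (set xs) \<le> card D" using D(2) by (rule card_mono)
  moreover have "card (set xs) = r p + 1" using xs(5) sw_distinct[OF xs(3)] by (simp add: distinct_card)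
  ultimately show ?thesis using \<open>card D = n + 1\<close> by simp
qed

end



lemma crown_low: "a \<in> crown6 \<Longrightarrow> c \<in> {3,4,5} \<Longrightarrow> \<exists>b\<in>crown6. crown6_le b c \<and> b \<noteq> c"
  unfolding crown6_def crown6_le_def by auto

lemma crown_up: "crown6_le b c \<Longrightarrow> b \<noteq> c \<Longrightarrow> c \<in> {3,4,5::nat} \<and> b \<in> {0,1,2}"
  unfolding crown6_le_def by auto

lemma crown_cu: "a \<in> {0,1,2} \<Longrightarrow> c \<in> {3,4,5::nat} \<Longrightarrow> crown6_le a c \<longleftrightarrow> a \<noteq> (c + 2) mod 3"
  unfolding crown6_le_def by (elim insertE emptyE; simp)

lemma cu_bij: "bij_betw (\<lambda>c. (c + 2) mod 3) {3,4,5::nat} {0,1,2}"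
  by (simp add: bij_betw_def inj_on_def insert_commute)

context stk begin

definition S where "S i = rank_slice P le i (i+1)"
definition Lev where "Lev i = {p \<in> P. r p = i}"

definition gi where "gi i = (SOME g. bij_betw g (S i) crown6 \<and> (\<forall>x\<in>S i. \<forall>y\<in>S i. le x y \<longleftrightarrow> crown6_le (g x) (g y)))"

lemma gi_prop: assumes "i < n"
  shows "bij_betw (gi i) (S i) crown6" "\<And>x y. x \<in> S i \<Longrightarrow> y \<in> S i \<Longrightarrow> le x y \<longleftrightarrow> crown6_le (gi i x) (gi i y)"
proof -
  have "order_isomorphic (S i) le crown6 crown6_le" using ss assms unfolding six_stack_def S_def by blast
  then have ex: "\<exists>g. bij_betw g (S i) crown6 \<and> (\<forall>x\<in>S i. \<forall>y\<in>S i. le x y \<longleftrightarrow> crown6_le (g x) (g y))"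
    unfolding order_isomorphic_def by blast
  have "bij_betw (gi i) (S i) crown6 \<and> (\<forall>x\<in>S i. \<forall>y\<in>S i. le x y \<longleftrightarrow> crown6_le (gi i x) (gi i y))"
    unfolding gi_def by (rule someI_ex[OF ex])
  then show "bij_betw (gi i) (S i) crown6" "\<And>x y. x \<in> S i \<Longrightarrow> y \<in> S i \<Longrightarrow> le x y \<longleftrightarrow> crown6_le (gi i x) (gi i y)"
    by blast+
qed

lemma Lev_S: "Lev i \<subseteq> S i" "Lev (Suc i) \<subseteq> S i" unfolding Lev_def S_def rank_slice_def by auto

lemma S_Lev: "x \<in> S i \<Longrightarrow> x \<in> Lev i \<or> x \<in> Lev (Suc i)" unfolding Lev_def S_def rank_slice_def by auto

lemma lev_low: assumes "i < n" "x \<in> Lev i" shows "gi i x \<in> {0,1,2}"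
proof (rule ccontr)
  assume c: "gi i x \<notin> {0,1,2}"
  have xS: "x \<in> S i" using Lev_S assms by auto
  have "gi i x \<in> crown6" using gi_prop(1)[OF assms(1)] xS unfolding bij_betw_def by auto
  then have "gi i x \<in> {3,4,5}" using c unfolding crown6_def by auto
  then obtain b where b: "b \<in> crown6" "crown6_le b (gi i x)" "b \<noteq> gi i x"
    using crown_low \<open>gi i x \<in> crown6\<close> by blast
  obtain z where z: "z \<in> S i" "gi i z = b" using gi_prop(1)[OF assms(1)] b(1) by (metis bij_betw_def imageE)
  have "le z x" "z \<noteq> x" using gi_prop(2)[OF assms(1) z(1) xS] b z by auto
  then have "r z < r x" using rank_less z(1) xS unfolding S_def rank_slice_def by auto
  then show False using z(1) assms(2) unfolding S_def rank_slice_def Lev_def by auto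
qed

lemma lev_high: assumes "i < n" "y \<in> Lev (Suc i)" shows "gi i y \<in> {3,4,5}"
proof -
  have yP: "y \<in> P" "r y = Suc i" using assms(2) unfolding Lev_def by auto
  obtain z where z: "z \<in> P" "le z y" "z \<noteq> y" "r z + 1 = r y" using rank_pred[OF yP(1)] yP by auto
  have zS: "z \<in> S i" and yS: "y \<in> S i" using z yP unfolding S_def rank_slice_def by auto
  have "crown6_le (gi i z) (gi i y)" using gi_prop(2)[OF assms(1) zS yS] z by auto
  moreover have "gi i z \<noteq> gi i y" using gi_prop(1)[OF assms(1)] zS yS z(3) unfolding bij_betw_def inj_on_def by auto
  ultimately show ?thesis using crown_up by blast
qed

lemma gi_bij_low: assumes "i < n" shows "bij_betw (gi i) (Lev i) {0,1,2}"
proof -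
  have b: "bij_betw (gi i) (S i) crown6" using gi_prop(1)[OF assms] .
  have inj: "inj_on (gi i) (Lev i)" using b Lev_S(1) unfolding bij_betw_def by (meson inj_on_subset)
  have sub: "gi i ` Lev i \<subseteq> {0,1,2}" using lev_low[OF assms] by (intro image_subsetI) blast
  have sup: "{0,1,2} \<subseteq> gi i ` Lev i"
  proof
    fix c :: nat assume c: "c \<in> {0,1,2}"
    then have "c \<in> crown6" unfolding crown6_def by auto
    then obtain z where z: "z \<in> S i" "gi i z = c" using b by (metis bij_betw_def imageE)
    have "z \<notin> Lev (Suc i)" using lev_high[OF assms] z c by fastforce
    then have "z \<in> Lev i" using S_Lev z(1) by blast
    then show "c \<in> gi i ` Lev i" using z(2) by blast
  qed
  show ?thesis using inj sub sup unfolding bij_betw_def by blast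
qed

lemma gi_bij_high: assumes "i < n" shows "bij_betw (gi i) (Lev (Suc i)) {3,4,5}"
proof -
  have b: "bij_betw (gi i) (S i) crown6" using gi_prop(1)[OF assms] .
  have inj: "inj_on (gi i) (Lev (Suc i))" using b Lev_S(2) unfolding bij_betw_def by (meson inj_on_subset)
  have sub: "gi i ` Lev (Suc i) \<subseteq> {3,4,5}" using lev_high[OF assms] by (intro image_subsetI) blast
  have sup: "{3,4,5} \<subseteq> gi i ` Lev (Suc i)"
  proof
    fix c :: nat assume c: "c \<in> {3,4,5}"
    then have "c \<in> crown6" unfolding crown6_def by auto
    then obtain z where z: "z \<in> S i" "gi i z = c" using b by (metis bij_betw_def imageE)
    have "z \<notin> Lev i" using lev_low[OF assms] z c by fastforce
    then have "z \<in> Lev (Suc i)" using S_Lev z(1) by blast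
    then show "c \<in> gi i ` Lev (Suc i)" using z(2) by blast
  qed
  show ?thesis using inj sub sup unfolding bij_betw_def by blast
qed

definition u where "u i y = inv_into (Lev i) (gi i) ((gi i y + 2) mod 3)"

lemma u_bij: assumes "i < n" shows "bij_betw (u i) (Lev (Suc i)) (Lev i)"
proof -
  have "bij_betw ((\<lambda>c. (c + 2) mod 3) \<circ> gi i) (Lev (Suc i)) {0,1,2}"
    using bij_betw_trans[OF gi_bij_high[OF assms] cu_bij] .
  moreover have "bij_betw (inv_into (Lev i) (gi i)) {0,1,2} (Lev i)"
    using bij_betw_inv_into[OF gi_bij_low[OF assms]] .
  ultimately have "bij_betw (inv_into (Lev i) (gi i) \<circ> ((\<lambda>c. (c + 2) mod 3) \<circ> gi i)) (Lev (Suc i)) (Lev i)"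
    by (rule bij_betw_trans)
  then show ?thesis unfolding u_def comp_def by simp
qed

lemma u_rel: assumes "i < n" "x \<in> Lev i" "y \<in> Lev (Suc i)" shows "le x y \<longleftrightarrow> x \<noteq> u i y"
proof -
  have xS: "x \<in> S i" and yS: "y \<in> S i" using assms Lev_S by auto
  have gy: "gi i y \<in> {3,4,5}" using lev_high assms by blast
  have gx: "gi i x \<in> {0,1,2}" using lev_low assms by blast
  have c: "(gi i y + 2) mod 3 \<in> {0,1,2}" by auto
  have uy: "u i y \<in> Lev i" "gi i (u i y) = (gi i y + 2) mod 3"
    unfolding u_def using gi_bij_low[OF assms(1)] c
    by (auto intro: inv_into_into bij_betw_inv_into_right simp: bij_betw_def)
  have "le x y \<longleftrightarrow> crown6_le (gi i x) (gi i y)" using gi_prop(2)[OF assms(1) xS yS] .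
  also have "\<dots> \<longleftrightarrow> gi i x \<noteq> (gi i y + 2) mod 3" using crown_cu gx gy by blast
  also have "\<dots> \<longleftrightarrow> x \<noteq> u i y" using uy gi_bij_low[OF assms(1)] assms(2)
    unfolding bij_betw_def inj_on_def by metis
  finally show ?thesis .
qed

primrec labf where
  "labf 0 x = gi 0 x"
| "labf (Suc i) y = labf i (u i y)"

lemma labf_bij: "i \<le> n \<Longrightarrow> bij_betw (labf i) (Lev i) {0,1,2}"
proof (induction i)
  case 0
  have e: "labf 0 = gi 0" by (rule ext) simp
  have "0 < n" using n1 by simp
  then show ?case unfolding e by (rule gi_bij_low)
next
  case (Suc i)
  then have i: "i < n" by simp
  have e: "labf (Suc i) = labf i \<circ> u i" by (rule ext) simp
  have "bij_betw (labf i) (Lev i) {0,1,2}" using Suc.IH i by simp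
  with u_bij[OF i] show ?case unfolding e by (rule bij_betw_trans)
qed

lemma labf_rel: assumes "i < n" "x \<in> Lev i" "y \<in> Lev (Suc i)" shows "le x y \<longleftrightarrow> labf i x \<noteq> labf (Suc i) y"
proof -
  have b: "bij_betw (labf i) (Lev i) {0,1,2}" using labf_bij assms(1) by simp
  have "u i y \<in> Lev i" using u_bij[OF assms(1)] assms(3) unfolding bij_betw_def by auto
  then have "x \<noteq> u i y \<longleftrightarrow> labf i x \<noteq> labf i (u i y)" using b assms(2) unfolding bij_betw_def inj_on_def by metis
  then show ?thesis using u_rel[OF assms] by simp
qed

end



context stk begin

lemma Lev_le: "x \<in> Lev i \<Longrightarrow> i \<le> n" unfolding Lev_def using rank_le_n by auto

lemma labf_ex: assumes "i \<le> n" "c \<in> {0,1,2}" shows "\<exists>y\<in>Lev i. labf i y = c"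
  using labf_bij[OF assms(1)] assms(2) by (metis bij_betw_def imageE)

lemma labf_range: assumes "x \<in> Lev i" shows "labf i x \<in> {0,1,2}"
  using labf_bij[OF Lev_le[OF assms]] assms unfolding bij_betw_def by blast

lemma other: "\<exists>c\<in>{0,1,2::nat}. c \<noteq> a \<and> c \<noteq> b"
proof -
  consider "a \<noteq> 0 \<and> b \<noteq> 0" | "a \<noteq> 1 \<and> b \<noteq> 1" | "a \<noteq> 2 \<and> b \<noteq> 2" by linarith
  then show ?thesis by cases auto
qed

lemma far: "\<And>i x z. x \<in> Lev i \<Longrightarrow> z \<in> Lev (i + 2 + d) \<Longrightarrow> le x z"
proof (induction d)
  case 0
  fix i x z assume x: "x \<in> Lev i" and z: "z \<in> Lev (i + 2 + 0)"
  have n2: "i + 2 \<le> n" using Lev_le[OF z] by simp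
  obtain c where c: "c \<in> {0,1,2}" "c \<noteq> labf i x" "c \<noteq> labf (Suc (Suc i)) z" using other by blast
  obtain y where y: "y \<in> Lev (Suc i)" "labf (Suc i) y = c" using labf_ex[OF _ c(1), of "Suc i"] n2 by auto
  have "le x y" using labf_rel[of i x y] x y c n2 by auto
  moreover have "le y z" using labf_rel[of "Suc i" y z] y z c n2 by auto
  moreover have "x \<in> P" "y \<in> P" "z \<in> P" using x y z unfolding Lev_def by auto
  ultimately show "le x z" using trans by blast
next
  case (Suc d)
  fix i x z assume x: "x \<in> Lev i" and z: "z \<in> Lev (i + 2 + Suc d)"
  have n2: "i + 3 \<le> n" using Lev_le[OF z] by simp
  obtain c where c: "c \<in> {0,1,2}" "c \<noteq> labf i x" using other by blast
  obtain y where y: "y \<in> Lev (Suc i)" "labf (Suc i) y = c" using labf_ex[OF _ c(1), of "Suc i"] n2 by auto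
  have "le x y" using labf_rel[of i x y] x y c n2 by auto
  moreover have "le y z" using Suc.IH[of y "Suc i" z] y z by simp
  moreover have "x \<in> P" "y \<in> P" "z \<in> P" using x y z unfolding Lev_def by auto
  ultimately show "le x z" using trans by blast
qed

definition pos where "pos x = (r x, labf (r x) x)"

lemma pos_ord: assumes "x \<in> P" "y \<in> P" shows "le x y \<longleftrightarrow> mle (pos x) (pos y)"
proof -
  have x: "x \<in> Lev (r x)" and y: "y \<in> Lev (r y)" using assms unfolding Lev_def by auto
  consider "r y < r x" | "r x = r y" | "r y = Suc (r x)" | "r x + 2 \<le> r y" by linarith
  then show ?thesis
  proof cases
    case 1
    have "\<not> le x y" using rank_less[OF assms] 1 by auto
    moreover have "\<not> mle (pos x) (pos y)" using 1 unfolding mle_def pos_def by auto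
    ultimately show ?thesis by simp
  next
    case 2
    have "le x y \<longleftrightarrow> x = y" using rank_less[OF assms] 2 refl[OF assms(1)] by auto
    also have "\<dots> \<longleftrightarrow> labf (r x) x = labf (r x) y" using labf_bij[OF Lev_le[OF x]] x y 2
      unfolding bij_betw_def inj_on_def by metis
    also have "\<dots> \<longleftrightarrow> mle (pos x) (pos y)" using 2 unfolding mle_def pos_def by auto
    finally show ?thesis .
  next
    case 3
    have "r x < n" using Lev_le[OF y] 3 by simp
    then have "le x y \<longleftrightarrow> labf (r x) x \<noteq> labf (Suc (r x)) y" using labf_rel x y 3 by simp
    then show ?thesis using 3 unfolding mle_def pos_def by auto
  next
    case 4
    then obtain d where d: "r y = r x + 2 + d" using le_Suc_ex by blast
    have "le x y" using far[OF x] y d by simp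
    then show ?thesis using 4 unfolding mle_def pos_def by auto
  qed
qed

lemma pos_bij: "bij_betw pos P (M n)"
proof -
  have inj: "inj_on pos P"
  proof
    fix x y assume xy: "x \<in> P" "y \<in> P" "pos x = pos y"
    then have "mle (pos x) (pos y)" "mle (pos y) (pos x)" by (auto simp: mle_def)
    then have "le x y" "le y x" using pos_ord xy by auto
    then show "x = y" using antis xy by blast
  qed
  have sub: "pos ` P \<subseteq> M n"
  proof
    fix z assume "z \<in> pos ` P"
    then obtain x where x: "x \<in> P" "z = pos x" by blast
    have "x \<in> Lev (r x)" using x unfolding Lev_def by auto
    then have "labf (r x) x \<in> {0,1,2}" by (rule labf_range)
    then show "z \<in> M n" using x rank_le_n unfolding M_def pos_def by auto
  qed
  have sup: "M n \<subseteq> pos ` P"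
  proof
    fix z assume z: "z \<in> M n"
    obtain i a where ia: "z = (i,a)" by fastforce
    have "i \<le> n" "a \<in> {0,1,2}" using z unfolding ia M_def by auto
    then obtain y where y: "y \<in> Lev i" "labf i y = a" using labf_ex by blast
    have "pos y = z" using y unfolding pos_def ia Lev_def by auto
    moreover have "y \<in> P" using y unfolding Lev_def by auto
    ultimately show "z \<in> pos ` P" by blast
  qed
  show ?thesis using inj sub sup unfolding bij_betw_def by blast
qed

end



lemma transfer:
  fixes pos :: "'a \<Rightarrow> nat \<times> nat" and P :: "'a set"
  assumes b: "bij_betw pos P (M n)"
    and o: "\<And>x y. x \<in> P \<Longrightarrow> y \<in> P \<Longrightarrow> le x y \<longleftrightarrow> mle (pos x) (pos y)"
    and d: "3 dvd n"
  shows "\<exists>Q. is_retract P le Q \<and> is_four_tower Q le"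
proof -
  define elt where "elt = inv_into P pos"
  have eltP: "m \<in> M n \<Longrightarrow> elt m \<in> P" for m
    unfolding elt_def using b by (metis bij_betw_def inv_into_into)
  have poselt: "m \<in> M n \<Longrightarrow> pos (elt m) = m" for m
    unfolding elt_def using b by (meson bij_betw_inv_into_right)
  have eltpos: "x \<in> P \<Longrightarrow> elt (pos x) = x" for x
    unfolding elt_def using b by (simp add: bij_betw_def)
  have posM: "x \<in> P \<Longrightarrow> pos x \<in> M n" for x using b unfolding bij_betw_def by blast
  define Q where "Q = elt ` QC n"
  define f where "f = elt \<circ> gM \<circ> pos"
  have QP: "Q \<subseteq> P" unfolding Q_def using eltP QC_M by blast
  have fP: "f ` P \<subseteq> Q"
  proof
    fix z assume "z \<in> f ` P"
    then obtain x where x: "x \<in> P" "z = f x" by blast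
    have "gM (pos x) \<in> QC n" using gM_in[OF d posM[OF x(1)]] .
    then show "z \<in> Q" unfolding Q_def x(2) f_def by simp
  qed
  have fmono: "\<forall>x\<in>P. \<forall>y\<in>P. le x y \<longrightarrow> le (f x) (f y)"
  proof (intro ballI impI)
    fix x y assume xy: "x \<in> P" "y \<in> P" "le x y"
    have m: "mle (pos x) (pos y)" using o xy by blast
    have gx: "gM (pos x) \<in> M n" "gM (pos y) \<in> M n" using gM_in[OF d] posM xy QC_M by blast+
    have "mle (gM (pos x)) (gM (pos y))" using gM_mono[OF _ _ m] posM[OF xy(1)] posM[OF xy(2)]
      unfolding M_def by auto
    then have "mle (pos (elt (gM (pos x)))) (pos (elt (gM (pos y))))" using poselt gx by simp
    then show "le (f x) (f y)" unfolding f_def using o eltP gx by simp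
  qed
  have ffix: "\<forall>q\<in>Q. f q = q"
  proof
    fix q assume "q \<in> Q"
    then obtain m where m: "m \<in> QC n" "q = elt m" unfolding Q_def by blast
    have "m \<in> M n" using m QC_M by blast
    then show "f q = q" unfolding f_def using m poselt gM_QC by simp
  qed
  have ret: "is_retract P le Q" unfolding is_retract_def using QP fP fmono ffix by blast
  have posQ: "bij_betw pos Q (QC n)"
  proof -
    have "inj_on pos Q" using b QP unfolding bij_betw_def by (meson inj_on_subset)
    moreover have "pos ` Q = QC n"
    proof -
      have "\<And>m. m \<in> QC n \<Longrightarrow> pos (elt m) = m" using poselt QC_M by blast
      then have "(\<lambda>m. pos (elt m)) ` QC n = QC n" by simp
      then show ?thesis unfolding Q_def image_image .
    qed
    ultimately show ?thesis unfolding bij_betw_def by blast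
  qed
  have TQ: "bij_betw (T \<circ> pos) Q (tower4 (2*(n div 3)+1))"
    using bij_betw_trans[OF posQ T_bij[OF d]] .
  have ordQ: "\<forall>x\<in>Q. \<forall>y\<in>Q. le x y \<longleftrightarrow> tower4_le ((T \<circ> pos) x) ((T \<circ> pos) y)"
  proof (intro ballI)
    fix x y assume xy: "x \<in> Q" "y \<in> Q"
    have "pos x \<in> QC n" "pos y \<in> QC n" using posQ xy unfolding bij_betw_def by blast+
    then show "le x y \<longleftrightarrow> tower4_le ((T \<circ> pos) x) ((T \<circ> pos) y)"
      using o[of x y] xy QP T_ord by auto
  qed
  have "is_four_tower Q le" unfolding is_four_tower_def order_isomorphic_def
    using TQ ordQ by (intro exI[of _ "2*(n div 3)+1"]) auto
  then show ?thesis using ret by blast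
qed

theorem corollary5p10:
  fixes P :: "'a set" and le :: "'a \<Rightarrow> 'a \<Rightarrow> bool" and n :: nat
  assumes "six_stack P le n"
    and "3 dvd n"
  shows "\<exists>Q. is_retract P le Q \<and> is_four_tower Q le"
proof -
  interpret stk P le n using assms(1) by unfold_locales
  show ?thesis using transfer[OF pos_bij pos_ord assms(2)] by blast
qed


end
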